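(* Suppose $f$ is $L_f$-smooth, $\mathbf{c}$ is $L_c$-smooth, and there exist $C,G>0$ such that for all $\mathbf{x}$: $\|\nabla f(\mathbf{x})\|\le G$, $\sup_{\mathbf{v}_h\in\partial h(\mathbf{x})}\|\mathbf{v}_h\|\le G$, $\sup_{\mathbf{v}_g\in\partial g(\mathbf{x})}\|\mathbf{v}_g\|\le G$, $\|\nabla\mathbf{c}(\mathbf{x})\|\le G$, $\|\mathbf{c}(\mathbf{x})\|\le C$; and the parameters satisfy $\mu_kL_{\rho_k}\le\frac14$, $\mu_{k+1}\le\mu_k$, $\rho_k\le\rho_{k+1}$, $0<\beta\le1$ for all $k\ge0$. Let $\underline\rho_K:=\min_{0\le k\le K-1}\rho_k$. Then for any $K\ge1$, $\frac1K\sum_{k=0}^{K-1}\|\nabla\mathbf{c}(\mathbf{x}^{k+1})\mathbf{c}(\mathbf{x}^{k+1})\|^2\le\frac{2}{\underline\rho_K^2K}\sum_{k=0}^{K-1}\|\mathbf{u}^{k+1}\|^2+\frac{18G^2}{\underline\rho_K^2}$. Moreover, if there exists $\delta>0$ such that $\|\nabla\mathbf{c}(\mathbf{x}^k)\mathbf{c}(\mathbf{x}^k)\|\ge\delta\|\mathbf{c}(\mathbf{x}^k)\|$ for all iterates $k\ge0$, then $\frac1K\sum_{k=0}^{K-1}\|\mathbf{c}(\mathbf{x}^{k+1})\|^2\le\frac{2}{\underline\rho_K^2\delta^2K}\sum_{k=0}^{K-1}\|\mathbf{u}^{k+1}\|^2+\frac{18G^2}{\delta^2\underline\rho_K^2}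$.
   Context: Problem: $\min f(\mathbf{x})+h(\mathbf{x})-g(\mathbf{x})$ s.t. $\mathbf{c}(\mathbf{x})=\mathbf{0}$, $f=\mathbb{E}_\xi[\mathbf{f}(\cdot,\xi)]$, $h,g$ proper closed convex; $\nabla\mathbf{c}(\mathbf{x})$ the transposed Jacobian. $Q_\rho(\mathbf{x})=f(\mathbf{x})+\frac{\rho}{2}\|\mathbf{c}(\mathbf{x})\|^2$, $L_\rho=\rho(\rho_0^{-1}L_f+G^2+CL_c)$. Iterates $(\mathbf{x}^k,\mathbf{z}^k)$ of MoSSP-P or MoSSP-R: $\mathbf{x}^{k+1}=\mathrm{prox}_{\mu_kh}(\mathbf{z}^k-\mu_k\mathbf{G}^k)$, $\mathbf{z}^{k+1}=\mathbf{z}^k-\beta(\mathrm{prox}_{\mu_kg}(\mathbf{z}^k)-\mathbf{x}^{k+1})$, with $\mathbf{G}^k$ the momentum estimator ($\mathbf{S}^k$ or $\mathbf{D}^k$) of $\nabla Q_{\rho_k}(\mathbf{x}^k)$; $\mathbf{u}^{k+1}:=\nabla Q_{\rho_k}(\mathbf{x}^{k+1})-\mathbf{G}^k+\mu_k^{-1}(\mathrm{prox}_{\mu_kg}(\mathbf{z}^k)-\mathbf{x}^{k+1})\in\nabla Q_{\rho_k}(\mathbf{x}^{k+1})+\partial h(\mathbf{x}^{k+1})-\partial g(\mathrm{prox}_{\mu_kg}(\mathbf{z}^k))$. *)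

theory Defs
  imports "HOL-Analysis.Analysis"
begin

definition jacT :: "('a::euclidean_space \<Rightarrow> 'b::euclidean_space) \<Rightarrow> 'a \<Rightarrow> 'b \<Rightarrow> 'a" where
  "jacT c x = adjoint (frechet_derivative c (at x))"

definition grad :: "('a::euclidean_space \<Rightarrow> real) \<Rightarrow> 'a \<Rightarrow> 'a" where
  "grad f x = jacT f x 1"

definition smooth_fun :: "real \<Rightarrow> ('a::euclidean_space \<Rightarrow> real) \<Rightarrow> bool" where
  "smooth_fun L f \<longleftrightarrow> (\<forall>x. f differentiable (at x)) \<and>
     (\<forall>x y. norm (grad f x - grad f y) \<le> L * norm (x - y))"

definition smooth_map :: "real \<Rightarrow> ('a::euclidean_space \<Rightarrow> 'b::euclidean_space) \<Rightarrow> bool" where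
  "smooth_map L c \<longleftrightarrow> (\<forall>x. c differentiable (at x)) \<and>
     (\<forall>x y. onorm (\<lambda>v. jacT c x v - jacT c y v) \<le> L * norm (x - y))"

definition subdiff :: "('a::real_inner \<Rightarrow> real) \<Rightarrow> 'a \<Rightarrow> 'a set" where
  "subdiff h x = {v. \<forall>y. h y \<ge> h x + inner v (y - x)}"

definition prox :: "real \<Rightarrow> ('a::real_normed_vector \<Rightarrow> real) \<Rightarrow> 'a \<Rightarrow> 'a" where
  "prox mu h z = (SOME x. \<forall>y. h x + norm (x - z)^2 / (2 * mu) \<le> h y + norm (y - z)^2 / (2 * mu))"

definition Qpen :: "('a \<Rightarrow> real) \<Rightarrow> ('a \<Rightarrow> 'b::real_normed_vector) \<Rightarrow> real \<Rightarrow> 'a \<Rightarrow> real" where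
  "Qpen f c rho x = f x + rho / 2 * (norm (c x))^2"

end

theory Submission
  imports Defs
begin

lemma prox_exists:
  fixes h :: "'a::euclidean_space \<Rightarrow> real"
  assumes hc: "convex_on UNIV h" and mu: "mu > 0"
  shows "\<exists>x. \<forall>y. h x + norm (x - z)^2 / (2 * mu) \<le> h y + norm (y - z)^2 / (2 * mu)"
proof -
  define \<phi> where "\<phi> y = h y + norm (y - z)^2 / (2 * mu)" for y
  have hcont: "continuous_on UNIV h" by (rule convex_on_continuous[OF open_UNIV hc])
  have \<phi>cont: "continuous_on A \<phi>" for A
    unfolding \<phi>_def
    using mu by (intro continuous_intros continuous_on_subset[OF hcont]) auto
  obtain w0 where w0: "w0 \<in> sphere z 1" "\<forall>w\<in>sphere z 1. h w0 \<le> h w"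
  proof -
    have "sphere z 1 \<noteq> {}" by (simp add: sphere_eq_empty)
    then show ?thesis using continuous_attains_inf[of "sphere z 1" h, OF compact_sphere] continuous_on_subset[OF hcont] that
      by blast
  qed
  define A where "A = \<bar>h w0 - h z\<bar>"
  have lowb: "h y \<ge> h z - norm (y - z) * A" if t1: "norm (y - z) \<ge> 1" for y
  proof -
    define t where "t = norm (y - z)"
    have tpos: "t > 0" using t1 t_def by auto
    define w where "w = (1 - 1/t) *\<^sub>R z + (1/t) *\<^sub>R y"
    have "w - z = (1/t) *\<^sub>R (y - z)" unfolding w_def by (simp add: algebra_simps)
    hence "norm (w - z) = 1" using tpos t_def by simp
    hence "w \<in> sphere z 1" by (simp add: dist_norm norm_minus_commute)
    hence hw: "h w0 \<le> h w" using w0 by blast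
    have "h w \<le> (1 - 1/t) * h z + (1/t) * h y"
      unfolding w_def using convexD_alt tpos t1 t_def
      by (intro convex_onD[OF hc]) auto
    hence "t * h w \<le> (t - 1) * h z + h y" using tpos
      by (simp add: field_simps)
    moreover have "t * h w0 \<le> t * h w" using hw tpos by (intro mult_left_mono) auto
    moreover have "t * (h w0 - h z) = t * h w0 - t * h z" "(t - 1) * h z = t * h z - h z"
      by (simp_all add: right_diff_distrib left_diff_distrib)
    ultimately have "h y \<ge> h z + t * (h w0 - h z)" by linarith
    moreover have "t * (h w0 - h z) \<ge> t * (- A)"
      by (rule mult_left_mono) (use tpos in \<open>auto simp: A_def\<close>)
    ultimately show ?thesis unfolding t_def by linarith
  qed
  define R where "R = max 1 (2 * mu * A) + 1"
  obtain x0 where x0: "x0 \<in> cball z R" "\<forall>y\<in>cball z R. \<phi> x0 \<le> \<phi> y"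
    using continuous_attains_inf[of "cball z R" \<phi>, OF compact_cball _ \<phi>cont] R_def
    by (metis cball_eq_empty linorder_not_less max.cobounded1 not_one_le_zero le_add_same_cancel2 order.trans zero_le_one)
  have "\<phi> x0 \<le> \<phi> y" for y
  proof (cases "y \<in> cball z R")
    case True then show ?thesis using x0 by blast
  next
    case False
    define t where "t = norm (y - z)"
    have tR: "t > R" using False t_def by (simp add: dist_norm norm_minus_commute)
    have t1: "t \<ge> 1" and tA: "t > 2 * mu * A" using tR R_def by auto
    have "\<phi> y \<ge> h z - t * A + t^2 / (2 * mu)" using lowb[of y] t1 t_def \<phi>_def by simp
    moreover have "t^2 / (2*mu) > t * A"
    proof -
      have "t * (2*mu*A) < t * t" using tA t1 by (intro mult_strict_left_mono) auto
      thus ?thesis using mu by (simp add: field_simps power2_eq_square)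
    qed
    ultimately have "\<phi> y > h z" by linarith
    moreover have "\<phi> z = h z" by (simp add: \<phi>_def)
    moreover have "\<phi> x0 \<le> \<phi> z" using x0 R_def by auto
    ultimately show ?thesis by linarith
  qed
  thus ?thesis unfolding \<phi>_def by blast
qed

lemma prox_opt:
  fixes h :: "'a::euclidean_space \<Rightarrow> real"
  assumes hc: "convex_on UNIV h" and mu: "mu > 0"
  shows "(1/mu) *\<^sub>R (z - prox mu h z) \<in> subdiff h (prox mu h z)"
proof -
  define x where "x = prox mu h z"
  have xmin: "\<forall>y. h x + norm (x - z)^2 / (2 * mu) \<le> h y + norm (y - z)^2 / (2 * mu)"
    unfolding x_def prox_def by (rule someI_ex[OF prox_exists[OF hc mu]])
  have "h y \<ge> h x + inner ((1/mu) *\<^sub>R (z - x)) (y - x)" for y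
  proof -
    define a where "a = h x - h y"
    define b where "b = inner (x - z) (y - x) / mu"
    define c where "c = norm (y - x)^2 / (2*mu)"
    have key: "a \<le> b + t * c" if t: "0 < t" "t \<le> 1" for t
    proof -
      define yt where "yt = x + t *\<^sub>R (y - x)"
      have "yt = (1 - t) *\<^sub>R x + t *\<^sub>R y" unfolding yt_def by (simp add: algebra_simps)
      hence hyt: "h yt \<le> (1 - t) * h x + t * h y" using t by (auto intro: convex_onD[OF hc])
      have nyt: "norm (yt - z)^2 = norm (x - z)^2 + 2 * t * inner (x - z) (y - x) + t^2 * norm (y - x)^2"
      proof -
        have "yt - z = (x - z) + t *\<^sub>R (y - x)" unfolding yt_def by simp
        thus ?thesis
          by (simp only: power2_norm_eq_inner inner_add_left inner_add_right inner_scaleR_left inner_scaleR_right)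
             (simp add: inner_commute power2_eq_square algebra_simps)
      qed
      hence "h x + norm (x - z)^2 / (2 * mu) \<le> (1 - t) * h x + t * h y + (norm (x - z)^2 + 2 * t * inner (x - z) (y - x) + t^2 * norm (y - x)^2) / (2 * mu)"
        using xmin[rule_format, of yt] hyt unfolding nyt by linarith
      moreover have "(norm (x - z)^2 + 2 * t * inner (x - z) (y - x) + t^2 * norm (y - x)^2) / (2 * mu)
          = norm (x - z)^2 / (2 * mu) + t * b + t * (t * c)" unfolding b_def c_def using mu
        by (simp add: add_divide_distrib power2_eq_square)
      moreover have "t * a = t * h x - t * h y" "(1 - t) * h x = h x - t * h x"
        unfolding a_def by (simp_all add: right_diff_distrib left_diff_distrib)
      ultimately have "t * a \<le> t * b + t * (t * c)" by linarith
      hence "t * a \<le> t * (b + t * c)" by (simp add: algebra_simps)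
      thus ?thesis using t by simp
    qed
    have c0: "c \<ge> 0" unfolding c_def using mu by simp
    have "a \<le> b"
    proof (rule ccontr)
      assume "\<not> a \<le> b"
      hence d: "a - b > 0" by simp
      define t where "t = min 1 ((a - b) / (2 * (c + 1)))"
      have tp: "0 < t" "t \<le> 1" unfolding t_def using d c0 by auto
      have "t * c \<le> (a - b) / (2 * (c + 1)) * c" unfolding t_def using c0 by (intro mult_right_mono) auto
      also have "\<dots> = (a - b) * (c / (2 * (c + 1)))" by simp
      also have "\<dots> < (a - b) * 1"
      proof (rule mult_strict_left_mono[OF _ d])
        show "c / (2 * (c + 1)) < 1" using c0 by (simp add: divide_less_eq)
      qed
      also have "\<dots> = a - b" by simp
      finally show False using key[OF tp] by linarith
    qed
    moreover have "inner ((1/mu) *\<^sub>R (z - x)) (y - x) = - (inner (x - z) (y - x) / mu)"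
    proof -
      have "inner (z - x) (y - x) = - inner (x - z) (y - x)" by (metis inner_minus_left minus_diff_eq)
      thus ?thesis by simp
    qed
    ultimately show ?thesis unfolding a_def b_def by linarith
  qed
  thus ?thesis unfolding subdiff_def x_def by auto
qed

lemma grad_Qpen:
  fixes f :: "'a::euclidean_space \<Rightarrow> real" and c :: "'a \<Rightarrow> 'b::euclidean_space"
  assumes fd: "f differentiable (at x)" and cd: "c differentiable (at x)"
  shows "grad (Qpen f c rho) x = grad f x + rho *\<^sub>R jacT c x (c x)"
proof -
  define Df where "Df = frechet_derivative f (at x)"
  define Dc where "Dc = frechet_derivative c (at x)"
  have hf: "(f has_derivative Df) (at x)" using fd unfolding Df_def by (simp add: frechet_derivative_works)
  have hc: "(c has_derivative Dc) (at x)" using cd unfolding Dc_def by (simp add: frechet_derivative_works)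
  define DQ where "DQ = (\<lambda>v. Df v + rho / 2 * (inner (c x) (Dc v) + inner (Dc v) (c x)))"
  have eqQ: "Qpen f c rho = (\<lambda>y. f y + rho / 2 * inner (c y) (c y))"
    unfolding Qpen_def by (simp add: power2_norm_eq_inner)
  have hQ: "(Qpen f c rho has_derivative DQ) (at x)"
    unfolding eqQ DQ_def
    by (intro has_derivative_add hf has_derivative_mult_right has_derivative_inner hc)
  hence fQ: "frechet_derivative (Qpen f c rho) (at x) = DQ" by (simp add: frechet_derivative_at[symmetric])
  have linQ: "linear DQ" using hQ by (simp add: has_derivative_linear)
  have linf: "linear Df" using hf by (simp add: has_derivative_linear)
  have linc: "linear Dc" using hc by (simp add: has_derivative_linear)
  have "v \<bullet> grad (Qpen f c rho) x = v \<bullet> (grad f x + rho *\<^sub>R jacT c x (c x))" for v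
  proof -
    have "v \<bullet> grad (Qpen f c rho) x = DQ v"
      unfolding grad_def jacT_def fQ adjoint_works[OF linQ] by simp
    also have "\<dots> = Df v + rho * inner (Dc v) (c x)" unfolding DQ_def by (simp add: inner_commute)
    also have "\<dots> = v \<bullet> (grad f x + rho *\<^sub>R jacT c x (c x))"
      unfolding grad_def jacT_def Df_def[symmetric] Dc_def[symmetric] inner_add_right inner_scaleR_right
        adjoint_works[OF linf] adjoint_works[OF linc] by simp
    finally show ?thesis .
  qed
  thus ?thesis using vector_eq_ldot by blast
qed
lemma fin_ineq:
  fixes r K S U G2 :: real
  assumes "r > 0" "K > 0" "r * S \<le> 2 * U + 18 * G2 * K"
  shows "(1 / K) * S \<le> 2 / (r * K) * U + 18 * G2 / r"
proof -
  have "(1 / K) * S = (r * S) / (r * K)" using assms by simp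
  also have "\<dots> \<le> (2 * U + 18 * G2 * K) / (r * K)" using assms by (intro divide_right_mono) auto
  also have "\<dots> = 2 / (r * K) * U + 18 * G2 / r" using assms by (simp add: add_divide_distrib)
  finally show ?thesis .
qed
theorem lemmaC4:
  fixes f h g :: "'a::euclidean_space \<Rightarrow> real"
    and c :: "'a \<Rightarrow> 'b::euclidean_space"
    and x z Gk u :: "nat \<Rightarrow> 'a"
    and mu rho :: "nat \<Rightarrow> real"
    and Lf Lc C G beta :: real
  assumes hconv: "convex_on UNIV h" and gconv: "convex_on UNIV g"
    and fsmooth: "smooth_fun Lf f" and csmooth: "smooth_map Lc c"
    and Cpos: "C > 0" and Gpos: "G > 0"
    and gradf_bd: "\<forall>y. norm (grad f y) \<le> G"
    and subh_bd: "\<forall>y. \<forall>v \<in> subdiff h y. norm v \<le> G"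
    and subg_bd: "\<forall>y. \<forall>v \<in> subdiff g y. norm v \<le> G"
    and jac_bd: "\<forall>y. onorm (jacT c y) \<le> G"
    and c_bd: "\<forall>y. norm (c y) \<le> C"
    and mu_pos: "\<forall>k. mu k > 0" and rho_pos: "\<forall>k. rho k > 0"
    and step: "\<forall>k. mu k * (rho k * (Lf / rho 0 + G^2 + C * Lc)) \<le> 1/4"
    and mu_mono: "\<forall>k. mu (Suc k) \<le> mu k"
    and rho_mono: "\<forall>k. rho k \<le> rho (Suc k)"
    and beta: "0 < beta" "beta \<le> 1"
    and xupd: "\<forall>k. x (Suc k) = prox (mu k) h (z k - mu k *\<^sub>R Gk k)"
    and zupd: "\<forall>k. z (Suc k) = z k - beta *\<^sub>R (prox (mu k) g (z k) - x (Suc k))"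
    and udef: "\<forall>k. u (Suc k) = grad (Qpen f c (rho k)) (x (Suc k)) - Gk k
                  + (1 / mu k) *\<^sub>R (prox (mu k) g (z k) - x (Suc k))"
  shows "\<forall>K::nat. K \<ge> 1 \<longrightarrow>
     (let rmin = Min (rho ` {..<K}) in
       (1 / real K) * (\<Sum>k<K. (norm (jacT c (x (Suc k)) (c (x (Suc k)))))^2)
         \<le> 2 / (rmin^2 * real K) * (\<Sum>k<K. (norm (u (Suc k)))^2) + 18 * G^2 / rmin^2
     \<and> (\<forall>\<delta>::real. \<delta> > 0 \<longrightarrow>
          (\<forall>k. norm (jacT c (x k) (c (x k))) \<ge> \<delta> * norm (c (x k))) \<longrightarrow>
          (1 / real K) * (\<Sum>k<K. (norm (c (x (Suc k))))^2)
            \<le> 2 / (rmin^2 * \<delta>^2 * real K) * (\<Sum>k<K. (norm (u (Suc k)))^2)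
              + 18 * G^2 / (\<delta>^2 * rmin^2)))"
  proof -
  have fdiff: "\<forall>y. f differentiable (at y)" using fsmooth unfolding smooth_fun_def by blast
  have cdiff: "\<forall>y. c differentiable (at y)" using csmooth unfolding smooth_map_def by blast
  define J where "J k = jacT c (x (Suc k)) (c (x (Suc k)))" for k
  have perk: "rho k * norm (J k) \<le> norm (u (Suc k)) + 3 * G" for k
  proof -
    define x' where "x' = x (Suc k)"
    define p where "p = prox (mu k) g (z k)"
    define w where "w = z k - mu k *\<^sub>R Gk k"
    have mk: "mu k > 0" using mu_pos by blast
    define vh where "vh = (1 / mu k) *\<^sub>R (w - x')"
    define vg where "vg = (1 / mu k) *\<^sub>R (z k - p)"
    have vh: "vh \<in> subdiff h x'" unfolding vh_def x'_def xupd[rule_format] w_def[symmetric]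
      by (rule prox_opt[OF hconv mk])
    have vg: "vg \<in> subdiff g p" unfolding vg_def p_def
      by (rule prox_opt[OF gconv mk])
    have nvh: "norm vh \<le> G" using subh_bd vh by blast
    have nvg: "norm vg \<le> G" using subg_bd vg by blast
    have ngf: "norm (grad f x') \<le> G" using gradf_bd by blast
    have d: "vh - vg = (1 / mu k) *\<^sub>R (p - x') - Gk k"
    proof -
      have "vh - vg = (1 / mu k) *\<^sub>R ((w - x') - (z k - p))" unfolding vh_def vg_def
        by (simp only: scaleR_diff_right)
      also have "(w - x') - (z k - p) = (p - x') - mu k *\<^sub>R Gk k" unfolding w_def by (simp add: algebra_simps)
      also have "(1 / mu k) *\<^sub>R ((p - x') - mu k *\<^sub>R Gk k) = (1 / mu k) *\<^sub>R (p - x') - Gk k"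
        using mk by (simp add: scaleR_diff_right)
      finally show ?thesis .
    qed
    have ueq: "u (Suc k) = grad f x' + rho k *\<^sub>R J k + vh - vg"
      unfolding udef[rule_format] grad_Qpen[OF fdiff[rule_format] cdiff[rule_format]] J_def x'_def[symmetric] p_def[symmetric]
      using d by (simp add: algebra_simps)
    hence re: "rho k *\<^sub>R J k = u (Suc k) - grad f x' - vh + vg" by (simp add: algebra_simps)
    have "norm (u (Suc k) - grad f x' - vh + vg) \<le> norm (u (Suc k) - grad f x' - vh) + norm vg"
      by (rule norm_triangle_ineq)
    moreover have "norm (u (Suc k) - grad f x' - vh) \<le> norm (u (Suc k) - grad f x') + norm vh"
      by (rule norm_triangle_ineq4)
    moreover have "norm (u (Suc k) - grad f x') \<le> norm (u (Suc k)) + norm (grad f x')"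
      by (rule norm_triangle_ineq4)
    ultimately have "norm (u (Suc k) - grad f x' - vh + vg) \<le> norm (u (Suc k)) + norm (grad f x') + norm vh + norm vg"
      by linarith
    hence "norm (rho k *\<^sub>R J k) \<le> norm (u (Suc k)) + norm (grad f x') + norm vh + norm vg"
      by (simp only: re)
    moreover have "norm (rho k *\<^sub>R J k) = rho k * norm (J k)" using rho_pos
      by (simp add: less_imp_le)
    ultimately show ?thesis using nvh nvg ngf by linarith
  qed
  show ?thesis
  proof (intro allI impI)
    fix K :: nat assume K1: "K \<ge> 1"
    define rmin where "rmin = Min (rho ` {..<K})"
    have "0 \<in> {..<K}" using K1 by simp
    hence ne: "rho ` {..<K} \<noteq> {}" by blast
    have rmin_in: "rmin \<in> rho ` {..<K}" unfolding rmin_def using ne by (intro Min_in) auto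
    have rpos: "rmin > 0" using rmin_in rho_pos by auto
    have rle: "rmin \<le> rho k" if "k < K" for k unfolding rmin_def using that by (intro Min_le) auto
    have Kpos: "real K > 0" using K1 by simp
    have bnd: "rmin^2 * (norm (J k))^2 \<le> 2 * (norm (u (Suc k)))^2 + 18 * G^2" if "k < K" for k
    proof -
      have a: "rmin * norm (J k) \<le> norm (u (Suc k)) + 3 * G"
        using perk[of k] rle[OF that] by (meson mult_right_mono norm_ge_zero order_trans)
      have "(rmin * norm (J k))^2 \<le> (norm (u (Suc k)) + 3 * G)^2"
        using a rpos by (intro power_mono) auto
      also have "\<dots> \<le> 2 * (norm (u (Suc k)))^2 + 18 * G^2"
      proof -
        have "2 * (norm (u (Suc k)))^2 + 18 * G^2 - (norm (u (Suc k)) + 3 * G)^2 = (norm (u (Suc k)) - 3 * G)^2"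
          by (simp add: power2_eq_square algebra_simps)
        thus ?thesis using zero_le_power2[of "norm (u (Suc k)) - 3 * G"] by linarith
      qed
      finally show ?thesis by (simp add: power_mult_distrib)
    qed
    have sumJ: "rmin^2 * (\<Sum>k<K. (norm (J k))^2) \<le> 2 * (\<Sum>k<K. (norm (u (Suc k)))^2) + 18 * G^2 * real K"
    proof -
      have "rmin^2 * (\<Sum>k<K. (norm (J k))^2) = (\<Sum>k<K. rmin^2 * (norm (J k))^2)" by (simp add: sum_distrib_left)
      also have "\<dots> \<le> (\<Sum>k<K. 2 * (norm (u (Suc k)))^2 + 18 * G^2)" by (intro sum_mono bnd) auto
      also have "\<dots> = 2 * (\<Sum>k<K. (norm (u (Suc k)))^2) + 18 * G^2 * real K"
        by (simp add: sum.distrib sum_distrib_left)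
      finally show ?thesis .
    qed
    have part1: "(1 / real K) * (\<Sum>k<K. (norm (J k))^2)
         \<le> 2 / (rmin^2 * real K) * (\<Sum>k<K. (norm (u (Suc k)))^2) + 18 * G^2 / rmin^2"
      by (rule fin_ineq[OF _ Kpos sumJ]) (use rpos in simp)
    have part2: "(1 / real K) * (\<Sum>k<K. (norm (c (x (Suc k))))^2)
            \<le> 2 / (rmin^2 * \<delta>^2 * real K) * (\<Sum>k<K. (norm (u (Suc k)))^2)
              + 18 * G^2 / (\<delta>^2 * rmin^2)"
      if dpos: "\<delta> > 0" and dk: "\<forall>k. norm (jacT c (x k) (c (x k))) \<ge> \<delta> * norm (c (x k))" for \<delta> :: real
    proof -
      have "\<delta>^2 * (norm (c (x (Suc k))))^2 \<le> (norm (J k))^2" for k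
      proof -
        have "\<delta> * norm (c (x (Suc k))) \<le> norm (J k)" using dk unfolding J_def by blast
        hence "(\<delta> * norm (c (x (Suc k))))^2 \<le> (norm (J k))^2" using dpos by (intro power_mono) auto
        thus ?thesis by (simp add: power_mult_distrib)
      qed
      hence "(\<Sum>k<K. \<delta>^2 * (norm (c (x (Suc k))))^2) \<le> (\<Sum>k<K. (norm (J k))^2)" by (intro sum_mono) auto
      hence "rmin^2 * (\<Sum>k<K. \<delta>^2 * (norm (c (x (Suc k))))^2) \<le> rmin^2 * (\<Sum>k<K. (norm (J k))^2)"
        by (intro mult_left_mono) auto
      hence "(rmin^2 * \<delta>^2) * (\<Sum>k<K. (norm (c (x (Suc k))))^2) \<le> 2 * (\<Sum>k<K. (norm (u (Suc k)))^2) + 18 * G^2 * real K"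
        using sumJ by (simp add: sum_distrib_left mult.assoc)
      from fin_ineq[OF _ Kpos this] have
        "(1 / real K) * (\<Sum>k<K. (norm (c (x (Suc k))))^2)
          \<le> 2 / (rmin^2 * \<delta>^2 * real K) * (\<Sum>k<K. (norm (u (Suc k)))^2) + 18 * G^2 / (rmin^2 * \<delta>^2)"
        using rpos dpos by simp
      thus ?thesis by (simp add: mult.commute)
    qed
    show "let rmin = Min (rho ` {..<K}) in
       (1 / real K) * (\<Sum>k<K. (norm (jacT c (x (Suc k)) (c (x (Suc k)))))^2)
         \<le> 2 / (rmin^2 * real K) * (\<Sum>k<K. (norm (u (Suc k)))^2) + 18 * G^2 / rmin^2
     \<and> (\<forall>\<delta>::real. \<delta> > 0 \<longrightarrow>
          (\<forall>k. norm (jacT c (x k) (c (x k))) \<ge> \<delta> * norm (c (x k))) \<longrightarrow>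
          (1 / real K) * (\<Sum>k<K. (norm (c (x (Suc k))))^2)
            \<le> 2 / (rmin^2 * \<delta>^2 * real K) * (\<Sum>k<K. (norm (u (Suc k)))^2)
              + 18 * G^2 / (\<delta>^2 * rmin^2))"
      unfolding Let_def rmin_def[symmetric] using part1 part2 unfolding J_def by blast
  qed
qed

end
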